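(* Let $n,m$ be positive integers with $2(m+1)\leq n$ and let $I$ be a non-empty independent set of $C_n^m$. Then $\gamma_{gr}(C_n^m,I)=n-|I|m$ if $|I|\geq 2$, and $\gamma_{gr}(C_n^m,I)=n-2m$ if $|I|=1$.
   Context: $C_n^m$ is the $m$-th power of the cycle $C_n$: vertex set $[n]=\{1,\dots,n\}$ (with addition modulo $n$), two distinct vertices being adjacent iff their distance in the cycle $1,2,\dots,n,1$ is at most $m$. For a sequence $S=(v_1,\dots,v_k)$ of distinct vertices, $\widehat S$ is its set of vertices, $|S|=k$, $PN_S(v_i)=N[v_i]\setminus\bigcup_{j<i}N[v_j]$ ($N[\cdot]$ the closed neighborhood). $S$ is a legal dominating sequence if $\widehat S$ is dominating and each $PN_S(v_i)\ne\emptyset$. For such $S$, the footprinter $f_S(x)$ of $x$ is the unique $v\in\widehat S$ with $x\in PN_S(v)$, and $I_S=\{v:f_S(v)=v\}$. For an independent set $I$, $\gamma_{gr}(G,I)$ is the maximum length of a legal dominating sequence $S$ of $G$ with $I_S=I$ ($-\infty$ if none exists). *)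

theory Defs
  imports Main "HOL-Library.Extended_Real"
begin

(* Graphs are given by a vertex set V and a symmetric irreflexive adjacency relation E. *)

definition closed_nbhd :: "'a set \<Rightarrow> ('a \<Rightarrow> 'a \<Rightarrow> bool) \<Rightarrow> 'a \<Rightarrow> 'a set" where
  "closed_nbhd V E v = {u \<in> V. u = v \<or> E v u}"

definition dominating :: "'a set \<Rightarrow> ('a \<Rightarrow> 'a \<Rightarrow> bool) \<Rightarrow> 'a set \<Rightarrow> bool" where
  "dominating V E D \<longleftrightarrow> D \<subseteq> V \<and> (\<forall>x\<in>V. \<exists>d\<in>D. x \<in> closed_nbhd V E d)"

definition independent :: "'a set \<Rightarrow> ('a \<Rightarrow> 'a \<Rightarrow> bool) \<Rightarrow> 'a set \<Rightarrow> bool" where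
  "independent V E I \<longleftrightarrow> I \<subseteq> V \<and> (\<forall>u\<in>I. \<forall>v\<in>I. \<not> E u v)"

(* private neighbourhood of the i-th (0-based) vertex of the sequence S *)
definition PN :: "'a set \<Rightarrow> ('a \<Rightarrow> 'a \<Rightarrow> bool) \<Rightarrow> 'a list \<Rightarrow> nat \<Rightarrow> 'a set" where
  "PN V E S i = closed_nbhd V E (S ! i) - (\<Union>j<i. closed_nbhd V E (S ! j))"

definition legal_dom_seq :: "'a set \<Rightarrow> ('a \<Rightarrow> 'a \<Rightarrow> bool) \<Rightarrow> 'a list \<Rightarrow> bool" where
  "legal_dom_seq V E S \<longleftrightarrow> distinct S \<and> set S \<subseteq> V \<and> dominating V E (set S)
      \<and> (\<forall>i<length S. PN V E S i \<noteq> {})"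

definition footprinter :: "'a set \<Rightarrow> ('a \<Rightarrow> 'a \<Rightarrow> bool) \<Rightarrow> 'a list \<Rightarrow> 'a \<Rightarrow> 'a" where
  "footprinter V E S x = S ! (THE i. i < length S \<and> x \<in> PN V E S i)"

definition I_S :: "'a set \<Rightarrow> ('a \<Rightarrow> 'a \<Rightarrow> bool) \<Rightarrow> 'a list \<Rightarrow> 'a set" where
  "I_S V E S = {v \<in> V. footprinter V E S v = v}"

(* maximum length of a legal dominating sequence S with I_S = I; -\<infinity> (= Sup {}) if none *)
definition gamma_gr :: "'a set \<Rightarrow> ('a \<Rightarrow> 'a \<Rightarrow> bool) \<Rightarrow> 'a set \<Rightarrow> ereal" where
  "gamma_gr V E I = Sup {ereal (real (length S)) | S. legal_dom_seq V E S \<and> I_S V E S = I}"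

(* the m-th power of the cycle 1,2,...,n,1 on vertex set {1..n} *)
definition cyc_dist :: "nat \<Rightarrow> nat \<Rightarrow> nat \<Rightarrow> nat" where
  "cyc_dist n i j = min (nat \<bar>int i - int j\<bar>) (n - nat \<bar>int i - int j\<bar>)"

definition cpow_adj :: "nat \<Rightarrow> nat \<Rightarrow> nat \<Rightarrow> nat \<Rightarrow> bool" where
  "cpow_adj n m u v \<longleftrightarrow> u \<noteq> v \<and> cyc_dist n u v \<le> m"

end

theory Submission
  imports Defs
begin


definition domS :: "'a set \<Rightarrow> ('a \<Rightarrow> 'a \<Rightarrow> bool) \<Rightarrow> 'a list \<Rightarrow> 'a set" where
  "domS V E S = (\<Union>s\<in>set S. closed_nbhd V E s)"

definition pleg :: "'a set \<Rightarrow> ('a \<Rightarrow> 'a \<Rightarrow> bool) \<Rightarrow> 'a list \<Rightarrow> bool" where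
  "pleg V E S \<longleftrightarrow> distinct S \<and> set S \<subseteq> V \<and> (\<forall>i<length S. PN V E S i \<noteq> {})"

definition Iof :: "'a set \<Rightarrow> ('a \<Rightarrow> 'a \<Rightarrow> bool) \<Rightarrow> 'a list \<Rightarrow> 'a set" where
  "Iof V E S = {S!i | i. i < length S \<and> S!i \<in> PN V E S i}"

lemma nbhd_sub: "closed_nbhd V E x \<subseteq> V" by (auto simp: closed_nbhd_def)
lemma nbhd_self: "x \<in> V \<Longrightarrow> x \<in> closed_nbhd V E x" by (auto simp: closed_nbhd_def)

lemma domS_nil[simp]: "domS V E [] = {}" by (simp add: domS_def)
lemma domS_snoc[simp]: "domS V E (S @ [x]) = domS V E S \<union> closed_nbhd V E x"
  by (auto simp: domS_def)
lemma domS_sub: "domS V E S \<subseteq> V" by (auto simp: domS_def closed_nbhd_def)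

lemma UN_take: "(\<Union>j<length S. f (S!j)) = (\<Union>s\<in>set S. f s)"
proof -
  have "set S = (\<lambda>j. S!j) ` {..<length S}" by (auto simp: in_set_conv_nth)
  then show ?thesis by simp
qed

lemma PN_snoc_old: "i < length S \<Longrightarrow> PN V E (S @ [x]) i = PN V E S i"
  by (simp add: PN_def nth_append)

lemma PN_snoc_new: "PN V E (S @ [x]) (length S) = closed_nbhd V E x - domS V E S"
proof -
  have "(\<Union>j<length S. closed_nbhd V E ((S @ [x]) ! j)) = (\<Union>j<length S. closed_nbhd V E (S ! j))"
    by (simp add: nth_append)
  then show ?thesis by (simp add: PN_def UN_take domS_def)
qed

lemma pleg_nil[simp]: "pleg V E []" by (simp add: pleg_def)

lemma pleg_snoc: "pleg V E (S @ [x]) \<longleftrightarrow> pleg V E S \<and> x \<in> V \<and> x \<notin> set S \<and> closed_nbhd V E x - domS V E S \<noteq> {}"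
proof -
  have "(\<forall>i<length (S@[x]). PN V E (S@[x]) i \<noteq> {}) \<longleftrightarrow>
        (\<forall>i<length S. PN V E S i \<noteq> {}) \<and> closed_nbhd V E x - domS V E S \<noteq> {}"
    by (auto simp: PN_snoc_old PN_snoc_new less_Suc_eq)
  then show ?thesis by (auto simp: pleg_def)
qed

lemma Iof_nil[simp]: "Iof V E [] = {}" by (simp add: Iof_def)

lemma Iof_snoc: assumes "x \<in> V"
  shows "Iof V E (S @ [x]) = Iof V E S \<union> (if x \<in> domS V E S then {} else {x})"
proof -
  have "Iof V E (S @ [x]) = {(S@[x])!i | i. i < length S \<and> (S@[x])!i \<in> PN V E (S@[x]) i}
        \<union> (if x \<in> PN V E (S@[x]) (length S) then {x} else {})"
    apply (auto simp: Iof_def less_Suc_eq)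
    by (metis lessI nth_append_length)
  also have "{(S@[x])!i | i. i < length S \<and> (S@[x])!i \<in> PN V E (S@[x]) i} = Iof V E S"
    by (auto simp: Iof_def PN_snoc_old nth_append)
  also have "(x \<in> PN V E (S@[x]) (length S)) = (x \<notin> domS V E S)"
    using assms by (simp add: PN_snoc_new nbhd_self)
  finally show ?thesis by auto
qed

lemma Iof_sub: "Iof V E S \<subseteq> set S" by (auto simp: Iof_def)

lemma set_sub_domS: "set S \<subseteq> V \<Longrightarrow> set S \<subseteq> domS V E S"
  by (auto simp: domS_def intro: nbhd_self)

lemma legal_iff: "legal_dom_seq V E S \<longleftrightarrow> pleg V E S \<and> domS V E S = V"
  using domS_sub[of V E S]
  by (auto simp: legal_dom_seq_def pleg_def dominating_def domS_def; blast)

lemma PN_mem: "v \<in> PN V E S j \<longleftrightarrow> v \<in> closed_nbhd V E (S!j) \<and> (\<forall>l<j. v \<notin> closed_nbhd V E (S!l))"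
  by (auto simp: PN_def)

lemma I_S_eq: assumes "legal_dom_seq V E S" shows "I_S V E S = Iof V E S"
proof (intro equalityI subsetI)
  have dom: "domS V E S = V" and pl: "pleg V E S" using assms by (simp_all add: legal_iff)
  have key: "\<exists>i<length S. v \<in> PN V E S i \<and> (\<forall>j<length S. v \<in> PN V E S j \<longrightarrow> j = i)" if "v \<in> V" for v
  proof -
    have "v \<in> domS V E S" using dom that by simp
    then have ex: "\<exists>i. i < length S \<and> v \<in> closed_nbhd V E (S!i)"
      by (auto simp: domS_def in_set_conv_nth)
    define i where "i = (LEAST i. i < length S \<and> v \<in> closed_nbhd V E (S!i))"
    have i1: "i < length S \<and> v \<in> closed_nbhd V E (S!i)"
      unfolding i_def by (rule LeastI_ex[OF ex])
    have i2: "\<forall>l<i. v \<notin> closed_nbhd V E (S!l)"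
      using not_less_Least i1 unfolding i_def by (metis (mono_tags, lifting) order.strict_trans)
    have "v \<in> PN V E S i" using i1 i2 PN_mem by metis
    moreover have "j = i" if "j < length S" "v \<in> PN V E S j" for j
    proof -
      have a: "v \<in> closed_nbhd V E (S!j)" "\<forall>l<j. v \<notin> closed_nbhd V E (S!l)" using that PN_mem by metis+
      show ?thesis using a i1 i2 that(1) by (metis linorder_neqE_nat)
    qed
    ultimately show ?thesis using i1 by blast
  qed
  have fp: "footprinter V E S v = S!i" if h: "v \<in> V" "i < length S" "v \<in> PN V E S i" for v i
  proof -
    obtain i' where "i' < length S" "v \<in> PN V E S i'" "\<forall>j<length S. v \<in> PN V E S j \<longrightarrow> j = i'"
      using key[OF h(1)] by blast
    then have "(THE i. i < length S \<and> v \<in> PN V E S i) = i"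
      using h by (intro the_equality) auto
    then show ?thesis by (simp add: footprinter_def)
  qed
  fix v
  { assume "v \<in> I_S V E S"
    then have v: "v \<in> V" "footprinter V E S v = v" by (auto simp: I_S_def)
    obtain i where i: "i < length S" "v \<in> PN V E S i" using key[OF v(1)] by blast
    then have "S!i = v" using fp v by metis
    then show "v \<in> Iof V E S" using i by (auto simp: Iof_def) }
  { assume "v \<in> Iof V E S"
    then obtain i where i: "i < length S" "S!i = v" "v \<in> PN V E S i" by (auto simp: Iof_def)
    have "v \<in> V" using pl i by (auto simp: pleg_def)
    then show "v \<in> I_S V E S" using fp i by (auto simp: I_S_def) }
qed




definition cv :: "nat \<Rightarrow> int \<Rightarrow> nat" where
  "cv n z = nat ((z - 1) mod int n) + 1"

lemma cv_range: "0 < n \<Longrightarrow> cv n z \<in> {1..n}"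
proof -
  assume n: "0 < n"
  have "(z - 1) mod int n < int n" "0 \<le> (z - 1) mod int n" using n by auto
  then show ?thesis unfolding cv_def by auto
qed

lemma cv_id: "1 \<le> z \<Longrightarrow> z \<le> int n \<Longrightarrow> cv n z = nat z"
  unfolding cv_def by (simp add: mod_pos_pos_trivial)

lemma cv_lo: "1 - int n \<le> z \<Longrightarrow> z \<le> 0 \<Longrightarrow> cv n z = nat (z + n)"
proof -
  assume a: "1 - int n \<le> z" "z \<le> 0"
  have "(z - 1) mod int n = (z - 1 + int n) mod int n" by simp
  also have "\<dots> = z - 1 + int n" using a by (intro mod_pos_pos_trivial) auto
  finally show ?thesis using a unfolding cv_def by auto
qed

lemma cv_hi: "int n + 1 \<le> z \<Longrightarrow> z \<le> 2 * int n \<Longrightarrow> cv n z = nat (z - n)"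
proof -
  assume a: "int n + 1 \<le> z" "z \<le> 2 * int n"
  have "(z - 1) mod int n = (z - 1 - int n) mod int n" using mod_add_self2[of "z - 1 - int n" "int n"] by simp
  also have "\<dots> = z - 1 - int n" using a by (intro mod_pos_pos_trivial) auto
  finally show ?thesis using a unfolding cv_def by auto
qed

lemma cv_int: "v \<in> {1..n} \<Longrightarrow> cv n (int v) = v"
  by (simp add: cv_id)

lemma cv_eq_iff: "0 < n \<Longrightarrow> cv n a = cv n b \<longleftrightarrow> (a - 1) mod int n = (b - 1) mod int n"
proof -
  assume n: "0 < n"
  have "0 \<le> (a - 1) mod int n" "0 \<le> (b - 1) mod int n" using n by auto
  then show ?thesis unfolding cv_def by (auto simp: nat_eq_iff)
qed

lemma cv_add_mult: "cv n (z + int n * k) = cv n z"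
proof -
  have "(z + int n * k - 1) mod int n = (z - 1) mod int n"
    using mod_mult_self2[of "z - 1" "int n" k] by (simp add: algebra_simps)
  then show ?thesis unfolding cv_def by simp
qed

lemma cv_cv: "0 < n \<Longrightarrow> cv n (int (cv n z) + k) = cv n (z + k)"
proof -
  assume n: "0 < n"
  have "0 \<le> (z - 1) mod int n" using n by auto
  then have "int (cv n z) = (z - 1) mod int n + 1" unfolding cv_def by simp
  then have "(int (cv n z) + k - 1) mod int n = (z + k - 1) mod int n"
    by (metis add.commute add_diff_cancel_left' diff_add_eq mod_add_left_eq)
  then show ?thesis unfolding cv_eq_iff[OF n] by simp
qed

lemma cv_inj: assumes "0 < n" "hi - lo < int n" shows "inj_on (cv n) {lo..hi}"
proof
  fix a b assume ab: "a \<in> {lo..hi}" "b \<in> {lo..hi}" "cv n a = cv n b"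
  then have "(a - 1) mod int n = (b - 1) mod int n" using cv_eq_iff assms(1) by blast
  then have "int n dvd ((a - 1) - (b - 1))" by (simp only: mod_eq_dvd_iff)
  then have d: "int n dvd (a - b)" by simp
  show "a = b"
  proof (rule ccontr)
    assume "a \<noteq> b"
    then have "\<bar>int n\<bar> \<le> \<bar>a - b\<bar>" using d dvd_imp_le_int[of "a - b" "int n"] by simp
    moreover have "\<bar>a - b\<bar> < int n" using ab assms by (simp add: abs_less_iff)
    ultimately show False by simp
  qed
qed

lemma cv_card: assumes "0 < n" "hi - lo < int n" shows "card (cv n ` {lo..hi}) = nat (hi - lo + 1)"
  using card_image[OF cv_inj[OF assms]] by simp

lemma cv_shift: "d mod int n = 0 \<Longrightarrow> cv n ` {a + d..b + d} = cv n ` {a..b}"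
proof -
  assume d: "d mod int n = 0"
  then obtain k where k: "d = int n * k" by (metis dvd_def mod_0_imp_dvd)
  have "{a + d..b + d} = (\<lambda>z. z + d) ` {a..b}" by (simp add: image_add_atLeastAtMost')
  then have "cv n ` {a + d..b + d} = (\<lambda>z. cv n (z + d)) ` {a..b}" by (simp only: image_image)
  also have "\<dots> = cv n ` {a..b}" using k cv_add_mult by simp
  finally show ?thesis .
qed

lemma cv_full: assumes "0 < n" shows "cv n ` {lo..lo + int n - 1} = {1..n}"
proof -
  have "cv n ` {lo..lo + int n - 1} \<subseteq> {1..n}" using cv_range assms by auto
  moreover have "card (cv n ` {lo..lo + int n - 1}) = card {1..n}"
    using cv_card[OF assms, of "lo + int n - 1" lo] by simp
  ultimately show ?thesis by (simp add: card_subset_eq)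
qed

lemma cyc_dist_le: "u \<le> n \<Longrightarrow> v \<le> n \<Longrightarrow>
   cyc_dist n v u \<le> m \<longleftrightarrow> \<bar>int v - int u\<bar> \<le> int m \<or> int n - \<bar>int v - int u\<bar> \<le> int m"
  unfolding cyc_dist_def by auto

lemma nbhd_int: assumes "2 * m < n" "v \<in> {1..n}"
  shows "closed_nbhd {1..n} (cpow_adj n m) v = cv n ` {int v - m..int v + m}"
proof -
  have cyc0: "cyc_dist n v v = 0" by (simp add: cyc_dist_def)
  have "closed_nbhd {1..n} (cpow_adj n m) v = {u \<in> {1..n}. cyc_dist n v u \<le> m}"
    unfolding closed_nbhd_def cpow_adj_def using cyc0 by auto
  also have "\<dots> = cv n ` {int v - m..int v + m}"
  proof (intro equalityI subsetI)
    fix u assume u: "u \<in> {u \<in> {1..n}. cyc_dist n v u \<le> m}"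
    then have ub: "1 \<le> u" "u \<le> n" and d: "\<bar>int v - int u\<bar> \<le> int m \<or> int n - \<bar>int v - int u\<bar> \<le> int m"
      using cyc_dist_le[of u n v m] assms by auto
    show "u \<in> cv n ` {int v - m..int v + m}"
    proof (cases "\<bar>int v - int u\<bar> \<le> int m")
      case True
      then show ?thesis using ub cv_id[of "int u" n] by (intro image_eqI[of _ _ "int u"]) auto
    next
      case False
      then have d2: "int n - \<bar>int v - int u\<bar> \<le> int m" using d by auto
      show ?thesis
      proof (cases "u > v")
        case True
        then show ?thesis using ub d2 assms cv_lo[of n "int u - int n"]
          by (intro image_eqI[of _ _ "int u - int n"]) auto
      next
        case False
        then show ?thesis using ub d2 assms cv_hi[of n "int u + int n"]
          by (intro image_eqI[of _ _ "int u + int n"]) auto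
      qed
    qed
  next
    fix u assume "u \<in> cv n ` {int v - m..int v + m}"
    then obtain z where z: "z \<in> {int v - m..int v + m}" "u = cv n z" by auto
    have n: "0 < n" using assms by auto
    have ur: "u \<in> {1..n}" using z cv_range n by auto
    consider "z \<le> 0" | "1 \<le> z \<and> z \<le> int n" | "int n + 1 \<le> z" by linarith
    then have "cyc_dist n v u \<le> m"
    proof cases
      case 1
      then have "u = nat (z + n)" using z assms cv_lo[of n z] by auto
      then show ?thesis using z 1 assms ur by (subst cyc_dist_le) auto
    next
      case 2
      then have "u = nat z" using z cv_id by auto
      then show ?thesis using z 2 assms ur by (subst cyc_dist_le) auto
    next
      case 3
      then have "u = nat (z - n)" using z assms cv_hi[of n z] by auto
      then show ?thesis using z 3 assms ur by (subst cyc_dist_le) auto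
    qed
    then show "u \<in> {u \<in> {1..n}. cyc_dist n v u \<le> m}" using ur by auto
  qed
  finally show ?thesis .
qed

lemma nbhd_cv: assumes "2 * m < n"
  shows "closed_nbhd {1..n} (cpow_adj n m) (cv n q) = cv n ` {q - m..q + m}"
proof -
  have n: "0 < n" using assms by auto
  have "cv n ` {q - m..q + m} = cv n ` {int (cv n q) - m..int (cv n q) + m}"
  proof -
    have "int (cv n q) = (q - 1) mod int n + 1" using n unfolding cv_def by simp
    then have "int (cv n q) - q = (q - 1) mod int n - (q - 1)" by simp
    moreover have "((q - 1) mod int n - (q - 1)) mod int n = 0"
      using mod_diff_left_eq[of "q-1" "int n" "q-1"] by simp
    ultimately have "(int (cv n q) - q) mod int n = 0" by metis
    then show ?thesis using cv_shift[of "int (cv n q) - q" n "q - m" "q + m"] by (simp add: algebra_simps)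
  qed
  then show ?thesis using nbhd_int[OF assms cv_range[OF n]] by simp
qed




definition bnd :: "nat \<Rightarrow> nat set \<Rightarrow> nat set" where
  "bnd n D = {x \<in> {1..n}. x \<in> D \<and> cv n (int x + 1) \<notin> D}"

locale cyc =
  fixes n m :: nat
  assumes m0: "0 < m" and nm: "2 * (m + 1) \<le> n"
begin

abbreviation "NB x \<equiv> closed_nbhd {1..n} (cpow_adj n m) x"
abbreviation "GV \<equiv> {1..n::nat}"
abbreviation "GE \<equiv> cpow_adj n m"

lemma n0: "0 < n" using nm by auto

lemma NB_cv: "NB (cv n q) = cv n ` {q - m..q + m}"
  using nbhd_cv[of m n q] nm by auto

lemma NB_x: "x \<in> GV \<Longrightarrow> NB x = cv n ` {int x - m..int x + m}"
  using nbhd_int[of m n x] nm by auto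

lemma bnd_mem: "(z::int) \<in> A \<Longrightarrow> cv n z \<in> D \<Longrightarrow> cv n (z + 1) \<notin> D \<Longrightarrow> cv n z \<in> bnd n D \<inter> cv n ` A"
  unfolding bnd_def using cv_range[OF n0] cv_cv[OF n0] by auto

lemma rc_aux: fixes c :: int assumes "cv n (c + m + 1) \<notin> D" "bnd n D \<inter> cv n ` {c..c + m} = {}"
  shows "k \<le> m + 1 \<Longrightarrow> cv n (c + int (m + 1 - k)) \<notin> D"
proof (induction k)
  case 0 then show ?case using assms(1) by (simp add: algebra_simps)
next
  case (Suc k)
  then have ih: "cv n (c + int (m + 1 - k)) \<notin> D" by simp
  define z where "z = c + int (m + 1 - Suc k)"
  have z1: "z + 1 = c + int (m + 1 - k)" using Suc.prems unfolding z_def by simp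
  have zA: "z \<in> {c..c + m}" using Suc.prems unfolding z_def by simp
  show ?case
  proof
    assume "cv n (c + int (m + 1 - Suc k)) \<in> D"
    then have zD: "cv n z \<in> D" unfolding z_def .
    have zn: "cv n (z + 1) \<notin> D" using ih by (simp add: z1)
    have "cv n z \<in> bnd n D \<inter> cv n ` {c..c + m}" using bnd_mem[OF zA zD zn] .
    then show False using assms(2) by blast
  qed
qed

lemma rc: fixes c z :: int assumes "cv n (c + m + 1) \<notin> D" "bnd n D \<inter> cv n ` {c..c + m} = {}" "c \<le> z" "z \<le> c + m + 1"
  shows "cv n z \<notin> D"
  using rc_aux[OF assms(1,2), of "nat (c + m + 1 - z)"] assms(3,4)
  by (simp add: of_nat_diff)

lemma lc_aux: fixes c :: int assumes "cv n c \<notin> D" "bnd n D \<inter> cv n ` {c - m - 1..c - 1} = {}"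
  shows "j \<le> m + 1 \<Longrightarrow> cv n (c - int j) \<notin> D"
proof (induction j)
  case 0 then show ?case using assms(1) by simp
next
  case (Suc j)
  then have ih: "cv n (c - int j) \<notin> D" by simp
  define z where "z = c - int (Suc j)"
  have z1: "z + 1 = c - int j" unfolding z_def by simp
  have zA: "z \<in> {c - m - 1..c - 1}" using Suc.prems unfolding z_def by simp
  show ?case
  proof
    assume "cv n (c - int (Suc j)) \<in> D"
    then have zD: "cv n z \<in> D" unfolding z_def .
    have zn: "cv n (z + 1) \<notin> D" using ih by (simp add: z1)
    have "cv n z \<in> bnd n D \<inter> cv n ` {c - m - 1..c - 1}" using bnd_mem[OF zA zD zn] .
    then show False using assms(2) by blast
  qed
qed

lemma lc: fixes c z :: int assumes "cv n c \<notin> D" "bnd n D \<inter> cv n ` {c - m - 1..c - 1} = {}" "c - m - 1 \<le> z" "z \<le> c"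
  shows "cv n z \<notin> D"
  using lc_aux[OF assms(1,2), of "nat (c - z)"] assms(3,4) by simp

lemma bnd_fin: "finite (bnd n D)" unfolding bnd_def by auto

lemma L1: fixes c :: int assumes "D \<subseteq> GV"
  shows "card (bnd n (D \<union> cv n ` {c - m..c + m})) + card (bnd n D \<inter> cv n ` {c - m - 1..c + m})
         \<le> card (bnd n D) + (if cv n (c + m + 1) \<in> D then 0 else 1)"
proof -
  let ?J = "cv n ` {c - m..c + m}" and ?R = "cv n ` {c - m - 1..c + m}"
  let ?E = "(if cv n (c + m + 1) \<in> D then {} else {cv n (c + m)})"
  have sub: "bnd n (D \<union> ?J) \<subseteq> (bnd n D - ?R) \<union> ?E"
  proof
    fix x assume x: "x \<in> bnd n (D \<union> ?J)"
    then have xV: "x \<in> GV" and xD: "x \<in> D \<union> ?J" and xn: "cv n (int x + 1) \<notin> D \<union> ?J"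
      unfolding bnd_def by auto
    show "x \<in> (bnd n D - ?R) \<union> ?E"
    proof (cases "x \<in> ?R")
      case True
      then obtain z where z: "z \<in> {c - m - 1..c + m}" "x = cv n z" by auto
      have x1: "cv n (int x + 1) = cv n (z + 1)" using z cv_cv[OF n0] by simp
      have "z = c + m"
      proof (rule ccontr)
        assume "z \<noteq> c + m"
        then have "z + 1 \<in> {c - m..c + m}" using z by auto
        then show False using xn x1 by auto
      qed
      then have "x = cv n (c + m)" "cv n (c + m + 1) \<notin> D" using z x1 xn by auto
      then show ?thesis by simp
    next
      case False
      have "?J \<subseteq> ?R" by auto
      then have "x \<in> D" using xD False by auto
      then show ?thesis using xV xn False unfolding bnd_def by auto
    qed
  qed
  have "card (bnd n (D \<union> ?J)) \<le> card ((bnd n D - ?R) \<union> ?E)"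
    using sub by (intro card_mono) (auto simp: bnd_fin)
  also have "\<dots> \<le> card (bnd n D - ?R) + card ?E" by (rule card_Un_le)
  also have "card ?E = (if cv n (c + m + 1) \<in> D then 0 else 1)" by simp
  finally have a: "card (bnd n (D \<union> ?J)) \<le> card (bnd n D - ?R) + (if cv n (c + m + 1) \<in> D then 0 else 1)" .
  have "bnd n D = (bnd n D - ?R) \<union> (bnd n D \<inter> ?R)" by blast
  then have "card (bnd n D) = card (bnd n D - ?R) + card (bnd n D \<inter> ?R)"
    using bnd_fin card_Un_disjoint[of "bnd n D - ?R" "bnd n D \<inter> ?R"] by (metis Diff_disjoint Int_Diff_disjoint finite_Diff finite_Int inf_commute)
  then show ?thesis using a by linarith
qed

end




lemma card_step:
  assumes "finite D" "finite J" "P \<subseteq> D" "x \<notin> P" "x \<in> J"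
  shows "card ((D \<union> J) - insert x P) + 1 = card (D - P) + card (J - D)"
proof -
  have e: "(D \<union> J) - P = (D - P) \<union> (J - D)" using assms by blast
  have "x \<in> (D \<union> J) - P" using assms by blast
  then have "card ((D \<union> J) - P) = card ((D \<union> J) - insert x P) + 1"
    using assms(1,2) by (metis Diff_insert2 card_Diff1_less card.remove finite_Diff finite_UnI Suc_eq_plus1 Diff_insert)
  moreover have "card ((D - P) \<union> (J - D)) = card (D - P) + card (J - D)"
    using assms by (intro card_Un_disjoint) auto
  ultimately show ?thesis using e by simp
qed

context cyc begin

lemma card_ge_mono: "A \<subseteq> B \<Longrightarrow> finite B \<Longrightarrow> card A = k \<Longrightarrow> k \<le> card B"
  using card_mono by blast

lemma inv: "pleg GV GE S \<Longrightarrow>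
  m * (card (Iof GV GE S) + card (bnd n (domS GV GE S))) \<le> card (domS GV GE S - set S)"
proof (induction S rule: rev_induct)
  case Nil
  then show ?case by (simp add: bnd_def)
next
  case (snoc x S)
  from snoc.prems have pl: "pleg GV GE S" and xV: "x \<in> GV" and xS: "x \<notin> set S"
    and pn: "NB x - domS GV GE S \<noteq> {}" by (auto simp: pleg_snoc)
  note IH = snoc.IH[OF pl]
  define D where "D = domS GV GE S"
  define c where "c = int x"
  define J where "J = NB x"
  have cx: "cv n c = x" using xV cv_int c_def by simp
  have J: "J = cv n ` {c - m..c + m}" using NB_x[OF xV] J_def c_def by simp
  have DV: "D \<subseteq> GV" unfolding D_def by (rule domS_sub)
  have PD: "set S \<subseteq> D" unfolding D_def using pl by (intro set_sub_domS) (auto simp: pleg_def)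
  have finJ: "finite J" unfolding J by simp
  define a where "a = card (J - D)"
  have a1: "1 \<le> a" unfolding a_def using pn finJ J_def D_def
    by (metis One_nat_def Suc_leI card_gt_0_iff finite_Diff)
  have xJ: "x \<in> J" unfolding J_def using xV by (rule nbhd_self)
  have Ueq: "card ((D \<union> J) - set (S @ [x])) + 1 = card (D - set S) + a"
    unfolding a_def using card_step[of D J "set S" x] DV PD xS xJ finJ
    by (simp add: finite_subset)
  have domS': "domS GV GE (S @ [x]) = D \<union> J" unfolding D_def J_def by simp
  define b where "b = card (bnd n D \<inter> cv n ` {c - m - 1..c + m})"
  define e where "e = (if cv n (c + m + 1) \<in> D then 0 else (1::nat))"
  have L1': "card (bnd n (D \<union> J)) + b \<le> card (bnd n D) + e"
    unfolding b_def e_def J using L1[OF DV, of c] by simp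
  have finB: "finite (bnd n D \<inter> cv n ` {c - m - 1..c + m})" by (simp add: bnd_fin)
  have IH': "m * (card (Iof GV GE S) + card (bnd n D)) \<le> card (D - set S)"
    using IH unfolding D_def .
  show ?case
  proof (cases "x \<in> D")
    case True
    have Iof': "Iof GV GE (S @ [x]) = Iof GV GE S" using Iof_snoc[OF xV] True D_def by simp
    have "e \<le> b"
    proof (cases "cv n (c + m + 1) \<in> D")
      case True then show ?thesis unfolding e_def by simp
    next
      case False
      have "bnd n D \<inter> cv n ` {c..c + m} \<noteq> {}"
      proof
        assume "bnd n D \<inter> cv n ` {c..c + m} = {}"
        then have "cv n c \<notin> D" using rc[OF False] by simp
        then show False using True cx by simp
      qed
      then have "bnd n D \<inter> cv n ` {c - m - 1..c + m} \<noteq> {}" by auto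
      then have "1 \<le> b" unfolding b_def using finB by (simp add: Suc_leI card_gt_0_iff)
      then show ?thesis unfolding e_def by simp
    qed
    then have "card (bnd n (D \<union> J)) \<le> card (bnd n D)" using L1' by simp
    then have "m * (card (Iof GV GE S) + card (bnd n (D \<union> J))) \<le> m * (card (Iof GV GE S) + card (bnd n D))"
      by (intro mult_le_mono2) simp
    moreover have "card (D - set S) \<le> card ((D \<union> J) - set (S @ [x]))" using Ueq a1 by linarith
    ultimately show ?thesis unfolding Iof' domS' using IH' by linarith
  next
    case False
    have Iof': "Iof GV GE (S @ [x]) = insert x (Iof GV GE S)" using Iof_snoc[OF xV] False D_def by simp
    have xI: "x \<notin> Iof GV GE S" using Iof_sub[of GV GE S] xS by blast
    have cardI: "card (Iof GV GE (S @ [x])) = card (Iof GV GE S) + 1"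
      unfolding Iof' using xI finite_subset[OF Iof_sub[of GV GE S]] by simp
    have cD: "cv n c \<notin> D" using False cx by simp
    define Lc where "Lc = (bnd n D \<inter> cv n ` {c - m - 1..c - 1} = {})"
    define Rc where "Rc = (bnd n D \<inter> cv n ` {c..c + m} = {})"
    have finJD: "finite (J - D)" using finJ by simp
    have F1: "m + 1 \<le> a" if Lc
    proof -
      have "cv n ` {c - m..c} \<subseteq> J - D" unfolding J using lc[OF cD that[unfolded Lc_def]] by auto
      moreover have "card (cv n ` {c - m..c}) = m + 1" using cv_card[OF n0, of c "c - m"] nm by simp
      ultimately show ?thesis unfolding a_def using card_ge_mono finJD by blast
    qed
    have F2: "m + 1 \<le> a" if Rc "cv n (c + m + 1) \<notin> D"
    proof -
      have "cv n ` {c..c + m} \<subseteq> J - D" unfolding J using rc[OF that(2) that(1)[unfolded Rc_def]] by auto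
      moreover have "card (cv n ` {c..c + m}) = m + 1" using cv_card[OF n0, of "c + m" c] nm by simp
      ultimately show ?thesis unfolding a_def using card_ge_mono finJD by blast
    qed
    have F3: "2 * m + 1 \<le> a" if Lc Rc "cv n (c + m + 1) \<notin> D"
    proof -
      have "J \<subseteq> J - D"
      proof
        fix y assume "y \<in> J"
        then obtain z where z: "z \<in> {c - m..c + m}" "y = cv n z" unfolding J by auto
        have "cv n z \<notin> D"
        proof (cases "z \<le> c")
          case True then show ?thesis using lc[OF cD that(1)[unfolded Lc_def]] z by simp
        next
          case False then show ?thesis using rc[OF that(3) that(2)[unfolded Rc_def]] z by simp
        qed
        then show "y \<in> J - D" using z \<open>y \<in> J\<close> by simp
      qed
      moreover have "card J = 2 * m + 1" unfolding J using cv_card[OF n0, of "c + m" "c - m"] nm by simp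
      ultimately show ?thesis unfolding a_def using card_ge_mono finJD by blast
    qed
    have F4: "1 \<le> b" if "\<not> Lc \<or> \<not> Rc"
    proof -
      have "bnd n D \<inter> cv n ` {c - m - 1..c + m} \<noteq> {}" using that unfolding Lc_def Rc_def by auto
      then show ?thesis unfolding b_def using finB by (simp add: Suc_leI card_gt_0_iff)
    qed
    have F5: "2 \<le> b" if nL: "\<not> Lc" and nR: "\<not> Rc"
    proof -
      obtain y1 where y1: "y1 \<in> bnd n D" "y1 \<in> cv n ` {c - m - 1..c - 1}" using nL unfolding Lc_def by auto
      obtain y2 where y2: "y2 \<in> bnd n D" "y2 \<in> cv n ` {c..c + m}" using nR unfolding Rc_def by auto
      obtain z1 where z1: "z1 \<in> {c - m - 1..c - 1}" "y1 = cv n z1" using y1 by auto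
      obtain z2 where z2: "z2 \<in> {c..c + m}" "y2 = cv n z2" using y2 by auto
      have inj: "inj_on (cv n) {c - m - 1..c + m}" using cv_inj[OF n0] nm by simp
      have "y1 \<noteq> y2"
      proof
        assume "y1 = y2"
        then have "z1 = z2" using inj z1 z2 by (auto dest: inj_onD)
        then show False using z1 z2 by simp
      qed
      moreover have "{y1, y2} \<subseteq> bnd n D \<inter> cv n ` {c - m - 1..c + m}" using y1 y2 by auto
      ultimately show ?thesis unfolding b_def using card_ge_mono[OF _ finB] by (metis card_2_iff)
    qed
    have mb1: "m \<le> m * b" if "1 \<le> b" using that by simp
    have mb2: "2 * m \<le> m * b" if "2 \<le> b" using that by (metis mult.commute mult_le_mono2)
    have claim: "m * (1 + e) + 1 \<le> m * b + a"
    proof (cases "cv n (c + m + 1) \<in> D")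
      case True
      then have "e = 0" unfolding e_def by simp
      show ?thesis
      proof (cases Lc)
        case True
        moreover have "m * (1 + e) = m" using \<open>e = 0\<close> by simp
        ultimately show ?thesis using F1 by fastforce
      next
        case False
        then have "m \<le> m * b" using F4 mb1 by blast
        moreover have "m * (1 + e) = m" using \<open>e = 0\<close> by simp
        ultimately show ?thesis using a1 by linarith
      qed
    next
      case False
      then have e1: "m * (1 + e) = 2 * m" unfolding e_def by simp
      show ?thesis
      proof (cases Lc; cases Rc)
        assume "Lc" "Rc" then show ?thesis using F3[OF _ _ False] e1 by fastforce
      next
        assume "Lc" "\<not> Rc"
        then have "m \<le> m * b" "m + 1 \<le> a" using F4 mb1 F1 by auto
        then show ?thesis using e1 by linarith
      next
        assume "\<not> Lc" "Rc"
        then have "m \<le> m * b" "m + 1 \<le> a" using F4 mb1 F2[OF _ False] by auto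
        then show ?thesis using e1 by linarith
      next
        assume "\<not> Lc" "\<not> Rc"
        then have "2 * m \<le> m * b" using F5 mb2 by auto
        then show ?thesis using e1 a1 by linarith
      qed
    qed
    have "m * (card (bnd n (D \<union> J)) + b) \<le> m * (card (bnd n D) + e)"
      using L1' by (rule mult_le_mono2)
    then have "m * card (Iof GV GE (S @ [x])) + m * card (bnd n (D \<union> J)) + m * b
          \<le> m * (card (Iof GV GE S) + card (bnd n D)) + m * (1 + e)"
      unfolding cardI by (simp add: algebra_simps)
    then show ?thesis unfolding domS' using IH' Ueq claim by (simp add: algebra_simps)
  qed
qed

end



context cyc begin

lemma bnd_V: "bnd n GV = {}" using cv_range[OF n0] by (auto simp: bnd_def)

lemma bnd_nonempty: assumes "D \<subseteq> GV" "d \<in> D" "bnd n D = {}" shows "D = GV"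
proof -
  have dV: "d \<in> GV" using assms by auto
  have all: "cv n (int d + int k) \<in> D" for k
  proof (induction k)
    case 0 then show ?case using assms(2) cv_int[OF dV] by simp
  next
    case (Suc k)
    let ?y = "cv n (int d + int k)"
    have "?y \<notin> bnd n D" using assms(3) by simp
    then have "cv n (int ?y + 1) \<in> D" using Suc cv_range[OF n0] unfolding bnd_def by auto
    moreover have "cv n (int ?y + 1) = cv n (int d + int (Suc k))" using cv_cv[OF n0, of "int d + int k" 1] by (simp add: algebra_simps)
    ultimately show ?case by simp
  qed
  have GVe: "GV = cv n ` {int d..int d + int n - 1}" using cv_full[OF n0] by simp
  show ?thesis
  proof
    show "D \<subseteq> GV" using assms(1) .
    show "GV \<subseteq> D"
    proof
      fix y assume "y \<in> GV"
      then obtain z where z: "z \<in> {int d..int d + int n - 1}" "y = cv n z" using GVe by blast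
      then have "z = int d + int (nat (z - int d))" by simp
      then show "y \<in> D" using all[of "nat (z - int d)"] z by metis
    qed
  qed
qed

lemma card_GV_diff: "set S \<subseteq> GV \<Longrightarrow> distinct S \<Longrightarrow> card (GV - set S) = n - length S"
proof -
  assume a: "set S \<subseteq> GV" "distinct S"
  have "card (GV - set S) = card GV - card (set S)" using a(1) by (intro card_Diff_subset) auto
  then show ?thesis using distinct_card[OF a(2)] by simp
qed

lemma ub1: assumes "legal_dom_seq GV GE S"
  shows "m * card (Iof GV GE S) + length S \<le> n"
proof -
  have pl: "pleg GV GE S" and dom: "domS GV GE S = GV" using assms by (simp_all add: legal_iff)
  have sub: "set S \<subseteq> GV" "distinct S" using pl by (auto simp: pleg_def)
  have "card (set S) \<le> card GV" using sub(1) by (intro card_mono) auto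
  then have "length S \<le> n" using distinct_card[OF sub(2)] by simp
  moreover have "m * card (Iof GV GE S) \<le> card (GV - set S)"
    using inv[OF pl] unfolding dom bnd_V by simp
  ultimately show ?thesis using card_GV_diff[OF sub] by linarith
qed

lemma card_NB: "x \<in> GV \<Longrightarrow> card (NB x) = 2 * m + 1"
  using NB_x cv_card[OF n0, of "int x + m" "int x - m"] nm by simp

lemma ub2: assumes "legal_dom_seq GV GE S"
  shows "2 * m + length S \<le> n"
proof -
  have pl: "pleg GV GE S" and dom: "domS GV GE S = GV" using assms by (simp_all add: legal_iff)
  have sub: "set S \<subseteq> GV" "distinct S" using pl by (auto simp: pleg_def)
  have "S \<noteq> []" using dom n0 by auto
  then obtain S0 x where S: "S = S0 @ [x]" by (metis rev_exhaust)
  have pl0: "pleg GV GE S0" and xV: "x \<in> GV" and xS: "x \<notin> set S0"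
    and pn: "NB x - domS GV GE S0 \<noteq> {}" using pl unfolding S by (auto simp: pleg_snoc)
  define D0 where "D0 = domS GV GE S0"
  have S0ne: "S0 \<noteq> []"
  proof
    assume "S0 = []"
    then have "NB x = GV" using dom S by (simp add: domS_def)
    then show False using card_NB[OF xV] nm by simp
  qed
  have sub0: "set S0 \<subseteq> GV" using pl0 by (auto simp: pleg_def)
  have h0: "S0 ! 0 \<in> GV" using S0ne sub0 by (simp add: subset_iff)
  have "S0 ! 0 \<in> PN GV GE S0 0" unfolding PN_def using nbhd_self[OF h0] by simp
  then have "S0 ! 0 \<in> Iof GV GE S0" unfolding Iof_def using S0ne by blast
  then have I1: "1 \<le> card (Iof GV GE S0)"
    using finite_subset[OF Iof_sub[of GV GE S0] finite_set] by (metis One_nat_def Suc_leI card_gt_0_iff empty_iff)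
  have D0V: "D0 \<subseteq> GV" unfolding D0_def by (rule domS_sub)
  have "S0 ! 0 \<in> D0" unfolding D0_def using set_sub_domS[OF sub0] S0ne by (simp add: subset_iff)
  moreover have "D0 \<noteq> GV" using pn nbhd_sub[of GV GE x] unfolding D0_def by blast
  ultimately have "bnd n D0 \<noteq> {}" using bnd_nonempty[OF D0V] by blast
  then have B1: "1 \<le> card (bnd n D0)" using bnd_fin by (metis One_nat_def Suc_leI card_gt_0_iff)
  have "m * (1 + 1) \<le> m * (card (Iof GV GE S0) + card (bnd n D0))"
    using I1 B1 by (intro mult_le_mono2) simp
  also have "\<dots> \<le> card (D0 - set S0)" using inv[OF pl0] unfolding D0_def .
  finally have A: "2 * m \<le> card (D0 - set S0)" by simp
  have PD: "set S0 \<subseteq> D0" unfolding D0_def using set_sub_domS[OF sub0] .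
  have "card ((D0 \<union> NB x) - insert x (set S0)) + 1 = card (D0 - set S0) + card (NB x - D0)"
  proof (rule card_step[OF _ _ PD xS nbhd_self[OF xV]])
    show "finite D0" using D0V finite_subset by blast
    show "finite (NB x)" using nbhd_sub[of GV GE x] finite_subset by blast
  qed
  moreover have "(D0 \<union> NB x) - insert x (set S0) = GV - set S"
    using dom unfolding S D0_def by simp
  moreover have "1 \<le> card (NB x - D0)" using pn unfolding D0_def
    by (metis One_nat_def Suc_leI card_gt_0_iff finite_Diff finite_atLeastAtMost finite_subset nbhd_sub)
  ultimately have "card (D0 - set S0) \<le> card (GV - set S)"
  proof -
    assume h: "card ((D0 \<union> NB x) - insert x (set S0)) + 1 = card (D0 - set S0) + card (NB x - D0)"
      "(D0 \<union> NB x) - insert x (set S0) = GV - set S" "1 \<le> card (NB x - D0)"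
    from h(1) have "card (GV - set S) + 1 = card (D0 - set S0) + card (NB x - D0)" unfolding h(2) .
    then show ?thesis using h(3) by linarith
  qed
  then show ?thesis using A card_GV_diff[OF sub] ub1[OF assms] by linarith
qed

end



definition nextQ :: "int set \<Rightarrow> int \<Rightarrow> int" where
  "nextQ Q t = Min {p \<in> Q. t < p}"

lemma nextQ: assumes "finite Q" "T \<in> Q" "t < T"
  shows "nextQ Q t \<in> Q" "t < nextQ Q t" "\<And>p. p \<in> Q \<Longrightarrow> t < p \<Longrightarrow> nextQ Q t \<le> p"
proof -
  have f: "finite {p \<in> Q. t < p}" and ne: "{p \<in> Q. t < p} \<noteq> {}" using assms by auto
  show "nextQ Q t \<in> Q" "t < nextQ Q t" using Min_in[OF f ne] unfolding nextQ_def by auto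
  show "\<And>p. p \<in> Q \<Longrightarrow> t < p \<Longrightarrow> nextQ Q t \<le> p" unfolding nextQ_def using f by (intro Min_le) auto
qed

lemma nextQ_skip: "t + 1 \<notin> Q \<Longrightarrow> nextQ Q (t + 1) = nextQ Q t"
proof -
  assume h: "t + 1 \<notin> Q"
  have "t + 1 < p" if "p \<in> Q" "t < p" for p using h that by (cases "p = t + 1") auto
  then have "{p \<in> Q. t + 1 < p} = {p \<in> Q. t < p}" by auto
  then show ?thesis unfolding nextQ_def by simp
qed

context cyc begin

lemma dom_single: "x \<in> GV \<Longrightarrow> pleg GV GE [x] \<and> domS GV GE [x] = NB x \<and> Iof GV GE [x] = {x} \<and> set [x] = {x}"
proof -
  assume xV: "x \<in> GV"
  have "pleg GV GE ([] @ [x])" using xV nbhd_self[OF xV] by (subst pleg_snoc) auto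
  moreover have "Iof GV GE ([] @ [x]) = {x}" using Iof_snoc[OF xV, of GE "[]"] by simp
  ultimately show ?thesis by (simp add: domS_def)
qed

lemma cv_notin: assumes "lo \<le> z" "z \<le> hi" "hi - lo < int n" "z \<notin> A" "A \<subseteq> {lo..hi}"
  shows "cv n z \<notin> cv n ` A"
proof
  assume "cv n z \<in> cv n ` A"
  then obtain w where w: "w \<in> A" "cv n z = cv n w" by auto
  have "z = w" using inj_onD[OF cv_inj[OF n0 assms(3)] w(2)] w(1) assms by auto
  then show False using w assms by simp
qed

lemma desc:
  fixes a :: int and J :: nat
  assumes "int J + 2 * m < n"
  shows "j \<le> J \<Longrightarrow> \<exists>S. pleg GV GE S \<and> domS GV GE S = cv n ` {a - int j - m..a + m}
      \<and> Iof GV GE S = {cv n a} \<and> set S = cv n ` {a - int j..a}"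
proof (induction j)
  case 0
  have xV: "cv n a \<in> GV" using cv_range[OF n0] .
  show ?case using dom_single[OF xV] NB_cv[of a] by (intro exI[of _ "[cv n a]"]) auto
next
  case (Suc j)
  then obtain S where S: "pleg GV GE S" "domS GV GE S = cv n ` {a - int j - m..a + m}"
      "Iof GV GE S = {cv n a}" "set S = cv n ` {a - int j..a}" by auto
  define x where "x = cv n (a - int j - 1)"
  have xV: "x \<in> GV" unfolding x_def using cv_range[OF n0] .
  have xD: "x \<in> domS GV GE S" unfolding S(2) x_def using m0 by auto
  have xS: "x \<notin> set S" unfolding S(4) x_def
    by (rule cv_notin[of "a - int j - 1" _ a]) (use Suc.prems assms in auto)
  have NBx: "NB x = cv n ` {a - int j - 1 - m..a - int j - 1 + m}" unfolding x_def by (rule NB_cv)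
  have w: "cv n (a - int j - 1 - m) \<notin> domS GV GE S" unfolding S(2)
    by (rule cv_notin[of "a - int j - 1 - m" _ "a + m"]) (use Suc.prems assms in auto)
  have "cv n (a - int j - 1 - m) \<in> NB x" unfolding NBx by auto
  then have pl: "pleg GV GE (S @ [x])" using S(1) xV xS w by (subst pleg_snoc) auto
  have "{a - int j - m..a + m} \<union> {a - int j - 1 - m..a - int j - 1 + m} = {a - int (Suc j) - m..a + m}"
    using m0 by auto
  then have d: "domS GV GE (S @ [x]) = cv n ` {a - int (Suc j) - m..a + m}"
    unfolding domS_snoc S(2) NBx by (simp add: image_Un[symmetric])
  have i: "Iof GV GE (S @ [x]) = {cv n a}" using Iof_snoc[OF xV] xD S(3) by simp
  have "insert (a - int j - 1) {a - int j..a} = {a - int (Suc j)..a}" by auto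
  then have s: "set (S @ [x]) = cv n ` {a - int (Suc j)..a}" unfolding x_def using S(4)
    by (metis image_insert set_append Un_commute insert_is_Un empty_set list.simps(15) set_simps)
  show ?case using pl d i s by blast
qed

end



lemma int_le_plus1: "(x::int) \<le> t + 1 \<Longrightarrow> x \<noteq> t + 1 \<Longrightarrow> x \<le> t" by linarith

context cyc begin

lemma middle:
  fixes Q Base :: "int set" and a T lam :: int and S0 :: "nat list"
  assumes fQ: "finite Q" and aQ: "a \<in> Q" and TQ: "T \<in> Q" and rng: "\<forall>p\<in>Q. a \<le> p \<and> p \<le> T"
    and sp: "\<forall>p\<in>Q. \<forall>p'\<in>Q. p < p' \<longrightarrow> p + m < p'"
    and lam: "lam \<le> a - m" and span: "T - lam \<le> n"
    and Base: "Base \<subseteq> {lam + m..a}"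
    and S0: "pleg GV GE S0" "domS GV GE S0 = cv n ` {lam..a + m}" "Iof GV GE S0 = {cv n a}"
       "set S0 = cv n ` Base"
  shows "a + int k < T \<Longrightarrow> \<exists>S. pleg GV GE S
     \<and> domS GV GE S = cv n ` {lam..min (a + int k + m) (nextQ Q (a + int k) - 1)}
     \<and> Iof GV GE S = cv n ` {p \<in> Q. p \<le> a + int k}
     \<and> set S = cv n ` (Base \<union> {q. a < q \<and> q \<le> a + int k \<and> \<not> (\<exists>p\<in>Q. q < p \<and> p \<le> q + m)})"
proof (induction k)
  case 0
  have n1: "a + m < nextQ Q a" using sp nextQ[OF fQ TQ] aQ 0 by auto
  have "min (a + m) (nextQ Q a - 1) = a + m" using n1 by simp
  moreover have "{p \<in> Q. p \<le> a} = {a}" using aQ rng by force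
  moreover have "Base \<union> {q. a < q \<and> q \<le> a \<and> \<not> (\<exists>p\<in>Q. q < p \<and> p \<le> q + m)} = Base" by auto
  ultimately show ?case using S0 by (intro exI[of _ S0]) (simp only: add_0_right of_nat_0, simp)
next
  case (Suc k)
  define t where "t = a + int k"
  have tT: "t + 1 < T" using Suc.prems unfolding t_def by simp
  have at: "a \<le> t" unfolding t_def by simp
  have st: "a + int (Suc k) = t + 1" unfolding t_def by simp
  obtain S where S: "pleg GV GE S" "domS GV GE S = cv n ` {lam..min (t + m) (nextQ Q t - 1)}"
     "Iof GV GE S = cv n ` {p \<in> Q. p \<le> t}"
     "set S = cv n ` (Base \<union> {q. a < q \<and> q \<le> t \<and> \<not> (\<exists>p\<in>Q. q < p \<and> p \<le> q + m)})"
    using Suc.IH tT unfolding t_def by auto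
  define nq where "nq = nextQ Q t"
  have nq: "nq \<in> Q" "t < nq" "\<And>p. p \<in> Q \<Longrightarrow> t < p \<Longrightarrow> nq \<le> p"
    using nextQ[OF fQ TQ] tT unfolding nq_def by auto
  have nqT: "nq \<le> T" using nq(3)[OF TQ] tT by simp
  let ?P = "\<lambda>q::int. \<not> (\<exists>p\<in>Q. q < p \<and> p \<le> q + m)"
  define PL where "PL = {q. a < q \<and> q \<le> t \<and> ?P q}"
  have PLs: "PL \<subseteq> {lam..t}" unfolding PL_def using lam m0 by auto
  have Bs: "Base \<subseteq> {lam..t}" using Base at by auto
  have setS: "set S = cv n ` (Base \<union> PL)" using S(4) unfolding PL_def .
  define x where "x = cv n (t + 1)"
  have xV: "x \<in> GV" unfolding x_def using cv_range[OF n0] .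
  have xS: "x \<notin> set S" unfolding setS x_def
    by (rule cv_notin[of lam _ "t + 1"]) (use lam at tT span PLs Bs in auto)
  have NBx: "NB x = cv n ` {t + 1 - m..t + 1 + m}" unfolding x_def by (rule NB_cv)
  have Pts: "{p \<in> Q. p \<le> t + 1} = {p \<in> Q. p \<le> t} \<union> (if t + 1 \<in> Q then {t + 1} else {})"
    by (auto intro: int_le_plus1)
  show ?case
  proof (cases "?P (t + 1)")
    case True
    have PL': "{q. a < q \<and> q \<le> t + 1 \<and> ?P q} = insert (t + 1) PL"
      unfolding PL_def using True at by auto
    have nq2: "t + 1 + m < nextQ Q (t + 1)"
    proof -
      have "nextQ Q (t + 1) \<in> Q" "t + 1 < nextQ Q (t + 1)" using nextQ[OF fQ TQ] tT by auto
      then show ?thesis using True by force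
    qed
    have top: "min (t + 1 + m) (nextQ Q (t + 1) - 1) = t + 1 + m" using nq2 by simp
    have top2: "t + 1 + m < T" using nq2 nextQ(3)[OF fQ TQ tT TQ tT] by simp
    have dS: "domS GV GE S \<subseteq> cv n ` {lam..t + m}" unfolding S(2) by auto
    have pn: "cv n (t + 1 + m) \<in> NB x - domS GV GE S"
    proof -
      have "cv n (t + 1 + m) \<notin> cv n ` {lam..t + m}"
        by (rule cv_notin[of lam _ "t + 1 + m"]) (use top2 span lam at in auto)
      then show ?thesis using dS NBx by auto
    qed
    have pl: "pleg GV GE (S @ [x])" using S(1) xV xS pn by (subst pleg_snoc) auto
    have dS2: "domS GV GE S \<union> NB x = cv n ` {lam..t + 1 + m}"
    proof -
      have "min (t + m) (nq - 1) = t \<or> min (t + m) (nq - 1) = t + m"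
      proof (cases "t + 1 \<in> Q")
        case True
        then have "nq = t + 1" using nq by force
        then show ?thesis by simp
      next
        case False
        then have "nq = nextQ Q (t + 1)" using nextQ_skip nq_def by simp
        then show ?thesis using nq2 by simp
      qed
      then have "{lam..min (t + m) (nq - 1)} \<union> {t + 1 - m..t + 1 + m} = {lam..t + 1 + m}"
        using lam at m0 by auto
      then show ?thesis unfolding S(2) NBx nq_def by (simp add: image_Un[symmetric])
    qed
    have iof: "Iof GV GE (S @ [x]) = cv n ` {p \<in> Q. p \<le> t + 1}"
    proof (cases "t + 1 \<in> Q")
      case True
      then have "nq = t + 1" using nq by force
      then have "domS GV GE S = cv n ` {lam..t}" unfolding S(2) nq_def by simp
      moreover have "x \<notin> cv n ` {lam..t}" unfolding x_def
        by (rule cv_notin[of lam _ "t + 1"]) (use tT span lam at in auto)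
      ultimately show ?thesis using Iof_snoc[OF xV, of GE S] S(3) True Pts x_def by auto
    next
      case False
      then have "nq = nextQ Q (t + 1)" using nextQ_skip nq_def by simp
      then have "domS GV GE S = cv n ` {lam..t + m}" unfolding S(2) nq_def using nq2 by simp
      moreover have "x \<in> cv n ` {lam..t + m}" unfolding x_def using lam at m0 by auto
      ultimately show ?thesis using Iof_snoc[OF xV, of GE S] S(3) False Pts by auto
    qed
    have "set (S @ [x]) = cv n ` (Base \<union> {q. a < q \<and> q \<le> t + 1 \<and> ?P q})"
      unfolding PL' using setS x_def by auto
    then show ?thesis unfolding st top using pl dS2 iof by (intro exI[of _ "S @ [x]"]) simp
  next
    case False
    then obtain p where p: "p \<in> Q" "t + 1 < p" "p \<le> t + 1 + m" by auto
    have t1Q: "t + 1 \<notin> Q" using sp p by force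
    have nqe: "nextQ Q (t + 1) = nq" using nextQ_skip[OF t1Q] nq_def by simp
    have "nq \<le> p" using nq(3)[OF p(1)] p by simp
    then have "min (t + m) (nq - 1) = nq - 1" "min (t + 1 + m) (nq - 1) = nq - 1" using p by auto
    then have d: "domS GV GE S = cv n ` {lam..min (t + 1 + m) (nextQ Q (t + 1) - 1)}"
      unfolding S(2) nqe nq_def by simp
    have "{p \<in> Q. p \<le> t + 1} = {p \<in> Q. p \<le> t}" using Pts t1Q by simp
    moreover have "{q. a < q \<and> q \<le> t + 1 \<and> ?P q} = PL" unfolding PL_def using False
      by (auto simp: order_le_less)
    ultimately show ?thesis unfolding st using S(1,3) setS d by (intro exI[of _ S]) simp
  qed
qed

end



context cyc begin

lemma lb_single: assumes vV: "v \<in> GV"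
  shows "\<exists>S. legal_dom_seq GV GE S \<and> Iof GV GE S = {v} \<and> length S = n - 2 * m"
proof -
  define a where "a = int v"
  define T where "T = a + int n - m"
  define Q where "Q = {a, T}"
  have cva: "cv n a = v" using cv_int[OF vV] a_def by simp
  have aT: "a + m < T" using nm unfolding T_def by simp
  have S0: "pleg GV GE [v]" "domS GV GE [v] = cv n ` {a - m..a + m}" "Iof GV GE [v] = {cv n a}"
       "set [v] = cv n ` {a}"
    using dom_single[OF vV] NB_x[OF vV] cva a_def by auto
  have "\<exists>S. pleg GV GE S
     \<and> domS GV GE S = cv n ` {a - m..min (a + int (nat (T - 1 - a)) + m) (nextQ Q (a + int (nat (T - 1 - a))) - 1)}
     \<and> Iof GV GE S = cv n ` {p \<in> Q. p \<le> a + int (nat (T - 1 - a))}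
     \<and> set S = cv n ` ({a} \<union> {q. a < q \<and> q \<le> a + int (nat (T - 1 - a)) \<and> \<not> (\<exists>p\<in>Q. q < p \<and> p \<le> q + m)})"
    by (rule middle[of Q a T "a - m" "{a}" "[v]" "nat (T - 1 - a)"])
       (use S0 aT in \<open>auto simp: Q_def T_def\<close>)
  moreover have "a + int (nat (T - 1 - a)) = T - 1" using aT by simp
  ultimately obtain S where S: "pleg GV GE S"
     "domS GV GE S = cv n ` {a - m..min (T - 1 + m) (nextQ Q (T - 1) - 1)}"
     "Iof GV GE S = cv n ` {p \<in> Q. p \<le> T - 1}"
     "set S = cv n ` ({a} \<union> {q. a < q \<and> q \<le> T - 1 \<and> \<not> (\<exists>p\<in>Q. q < p \<and> p \<le> q + m)})"
    by auto
  have "nextQ Q (T - 1) \<in> Q" "T - 1 < nextQ Q (T - 1)"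
    using nextQ[of Q T "T - 1"] unfolding Q_def by auto
  then have nq: "nextQ Q (T - 1) = T" using aT unfolding Q_def by auto
  have "min (T - 1 + m) (T - 1) = a - m + int n - 1" unfolding T_def by simp
  then have "domS GV GE S = cv n ` {a - m..a - m + int n - 1}" unfolding S(2) nq by (simp only:)
  then have dom: "domS GV GE S = GV" using cv_full[OF n0] by simp
  have "{p \<in> Q. p \<le> T - 1} = {a}" using aT unfolding Q_def by auto
  then have iof: "Iof GV GE S = {v}" using S(3) cva by simp
  have "{a} \<union> {q. a < q \<and> q \<le> T - 1 \<and> \<not> (\<exists>p\<in>Q. q < p \<and> p \<le> q + m)} = {a..a + int n - 2 * m - 1}"
    using aT unfolding Q_def T_def by auto
  then have "set S = cv n ` {a..a + int n - 2 * m - 1}" using S(4) by simp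
  then have "card (set S) = n - 2 * m" using cv_card[OF n0, of "a + int n - 2 * m - 1" a] nm by simp
  moreover have "distinct S" using S(1) by (simp add: pleg_def)
  ultimately have "length S = n - 2 * m" using distinct_card by metis
  then show ?thesis using S(1) dom iof legal_iff by blast
qed

lemma sep: assumes "u \<in> GV" "v \<in> GV" "u \<noteq> v" "\<not> cpow_adj n m u v"
  shows "int m < \<bar>int u - int v\<bar> \<and> int m < int n - \<bar>int u - int v\<bar>"
proof -
  have "\<not> cyc_dist n u v \<le> m" using assms unfolding cpow_adj_def by auto
  then show ?thesis using cyc_dist_le[of v n u m] assms by auto
qed

lemma lb_multi: assumes IV: "I \<subseteq> GV" and ind: "\<forall>u\<in>I. \<forall>v\<in>I. \<not> cpow_adj n m u v"
    and c2: "2 \<le> card I"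
  shows "\<exists>S. legal_dom_seq GV GE S \<and> Iof GV GE S = I \<and> n - card I * m \<le> length S"
proof -
  have fI: "finite I" using IV finite_subset by blast
  define Q where "Q = int ` I"
  have fQ: "finite Q" using fI Q_def by simp
  have cQ: "card Q = card I" unfolding Q_def by (simp add: card_image)
  have Qne: "Q \<noteq> {}" using c2 cQ by auto
  define a where "a = Min Q"
  define T where "T = Max Q"
  have aQ: "a \<in> Q" and TQ: "T \<in> Q" unfolding a_def T_def using fQ Qne by auto
  have rng: "\<forall>p\<in>Q. a \<le> p \<and> p \<le> T" unfolding a_def T_def using fQ by auto
  have sepQ: "int m < \<bar>p - p'\<bar> \<and> int m < int n - \<bar>p - p'\<bar>" if h: "p \<in> Q" "p' \<in> Q" "p \<noteq> p'" for p p'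
  proof -
    obtain u v where "u \<in> I" "v \<in> I" "p = int u" "p' = int v" using h Q_def by auto
    moreover have "u \<in> GV" "v \<in> GV" using IV \<open>u \<in> I\<close> \<open>v \<in> I\<close> by auto
    moreover have "u \<noteq> v" using h \<open>p = int u\<close> \<open>p' = int v\<close> by auto
    ultimately show ?thesis using sep[of u v] ind by auto
  qed
  have sp: "\<forall>p\<in>Q. \<forall>p'\<in>Q. p < p' \<longrightarrow> p + m < p'" using sepQ by fastforce
  have aT: "a < T"
  proof (rule ccontr)
    assume "\<not> a < T"
    then have "Q \<subseteq> {a}" using rng by force
    then have "card Q \<le> 1" using card_mono[of "{a}" Q] by simp
    then show False using c2 cQ by simp
  qed
  have aT2: "a + m < T" using sp aQ TQ aT by blast
  have aT3: "T - a < int n - m" using sepQ[OF TQ aQ] aT by auto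
  define lam where "lam = T + 1 - int n"
  define J where "J = nat (a - lam - m)"
  have Jv: "int J = a - lam - m" unfolding J_def lam_def using aT3 by simp
  have J2: "int J + 2 * m < n" using Jv aT2 unfolding lam_def by simp
  obtain S0 where S0: "pleg GV GE S0" "domS GV GE S0 = cv n ` {a - int J - m..a + m}"
      "Iof GV GE S0 = {cv n a}" "set S0 = cv n ` {a - int J..a}"
    using desc[OF J2, of J a] by auto
  have e1: "a - int J - m = lam" "a - int J = lam + m" using Jv by auto
  have "\<exists>S. pleg GV GE S
     \<and> domS GV GE S = cv n ` {lam..min (a + int (nat (T - 1 - a)) + m) (nextQ Q (a + int (nat (T - 1 - a))) - 1)}
     \<and> Iof GV GE S = cv n ` {p \<in> Q. p \<le> a + int (nat (T - 1 - a))}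
     \<and> set S = cv n ` ({lam + m..a} \<union> {q. a < q \<and> q \<le> a + int (nat (T - 1 - a)) \<and> \<not> (\<exists>p\<in>Q. q < p \<and> p \<le> q + m)})"
    by (rule middle[of Q a T lam "{lam + m..a}" S0 "nat (T - 1 - a)"])
       (use fQ aQ TQ rng sp S0 e1 aT aT3 in \<open>auto simp: lam_def\<close>)
  moreover have "a + int (nat (T - 1 - a)) = T - 1" using aT by simp
  ultimately obtain S where S: "pleg GV GE S"
     "domS GV GE S = cv n ` {lam..min (T - 1 + m) (nextQ Q (T - 1) - 1)}"
     "Iof GV GE S = cv n ` {p \<in> Q. p \<le> T - 1}"
     "set S = cv n ` ({lam + m..a} \<union> {q. a < q \<and> q \<le> T - 1 \<and> \<not> (\<exists>p\<in>Q. q < p \<and> p \<le> q + m)})"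
    by auto
  have "nextQ Q (T - 1) \<in> Q" "T - 1 < nextQ Q (T - 1)"
    using nextQ[OF fQ TQ, of "T - 1"] by auto
  then have nq: "nextQ Q (T - 1) = T" using rng by force
  have domS: "domS GV GE S = cv n ` {lam..T - 1}" unfolding S(2) nq by simp
  define x where "x = cv n T"
  have xV: "x \<in> GV" unfolding x_def using cv_range[OF n0] .
  have xD: "x \<notin> domS GV GE S" unfolding domS x_def
    by (rule cv_notin[of lam _ T]) (use n0 in \<open>auto simp: lam_def\<close>)
  have sS: "set S \<subseteq> domS GV GE S" using S(1) by (intro set_sub_domS) (auto simp: pleg_def)
  have pl: "pleg GV GE (S @ [x])" using S(1) xV xD sS nbhd_self[OF xV] by (subst pleg_snoc) auto
  have NBx: "NB x = cv n ` {T - m..T + m}" unfolding x_def by (rule NB_cv)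
  have "GV = cv n ` {lam..lam + int n - 1}" using cv_full[OF n0] by simp
  also have "\<dots> \<subseteq> cv n ` ({lam..T - 1} \<union> {T - m..T + m})"
    by (intro image_mono subsetI) (simp add: lam_def, linarith)
  also have "\<dots> = domS GV GE (S @ [x])" unfolding domS_snoc domS NBx image_Un ..
  finally have GVs: "GV \<subseteq> domS GV GE (S @ [x])" .
  have dom: "domS GV GE (S @ [x]) = GV" by (rule equalityI[OF domS_sub GVs])
  have "{p \<in> Q. p \<le> T - 1} \<union> {T} = Q" using rng TQ by force
  then have "Iof GV GE (S @ [x]) = cv n ` Q" using Iof_snoc[OF xV, of GE S] xD S(3) x_def by auto
  also have "cv n ` Q = I" unfolding Q_def using IV by (force simp: image_image cv_int)
  finally have iof: "Iof GV GE (S @ [x]) = I" .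
  have leg: "legal_dom_seq GV GE (S @ [x])" using pl dom legal_iff by blast
  define blk where "blk p = (if p = a then {lam..lam + m - 1} else {p - m..p - 1})" for p
  have setS': "set (S @ [x]) = cv n ` ({lam + m..a} \<union> {q. a < q \<and> q \<le> T - 1 \<and> \<not> (\<exists>p\<in>Q. q < p \<and> p \<le> q + m)} \<union> {T})"
    using S(4) x_def by auto
  have sub: "GV - set (S @ [x]) \<subseteq> cv n ` (\<Union>p\<in>Q. blk p)"
  proof
    fix y assume y: "y \<in> GV - set (S @ [x])"
    have "GV = cv n ` {lam..lam + int n - 1}" using cv_full[OF n0] by simp
    then obtain q where q: "q \<in> {lam..lam + int n - 1}" "y = cv n q" using y by auto
    have qn: "q \<notin> {lam + m..a} \<union> {q. a < q \<and> q \<le> T - 1 \<and> \<not> (\<exists>p\<in>Q. q < p \<and> p \<le> q + m)} \<union> {T}"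
      using y q setS' by auto
    have "q \<in> (\<Union>p\<in>Q. blk p)"
    proof (cases "q < lam + m")
      case True then show ?thesis using aQ q unfolding blk_def by auto
    next
      case False
      then have "a < q" "q \<le> T - 1" using qn q unfolding lam_def by auto
      then obtain p where p: "p \<in> Q" "q < p" "p \<le> q + m" using qn by auto
      then have "p \<noteq> a" using \<open>a < q\<close> by auto
      then have "q \<in> blk p" unfolding blk_def using p by auto
      then show ?thesis using p by auto
    qed
    then show "y \<in> cv n ` (\<Union>p\<in>Q. blk p)" using q by auto
  qed
  have "card (GV - set (S @ [x])) \<le> card (cv n ` (\<Union>p\<in>Q. blk p))"
    using sub by (intro card_mono) (auto simp: blk_def fQ)
  also have "\<dots> \<le> card (\<Union>p\<in>Q. blk p)" by (rule card_image_le) (auto simp: blk_def fQ)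
  also have "\<dots> \<le> (\<Sum>p\<in>Q. card (blk p))" by (rule card_UN_le[OF fQ])
  also have "\<dots> = (\<Sum>p\<in>Q. m)" by (intro sum.cong) (auto simp: blk_def)
  also have "\<dots> = card I * m" using cQ by simp
  finally have cb: "card (GV - set (S @ [x])) \<le> card I * m" .
  have "card (GV - set (S @ [x])) = n - length (S @ [x])"
    using pl by (intro card_GV_diff) (auto simp: pleg_def)
  then have "n - card I * m \<le> length (S @ [x])" using cb ub1[OF leg] by linarith
  then show ?thesis using leg iof by blast
qed

end



theorem lemma5:
  fixes n m :: nat and I :: "nat set"
  assumes "0 < n" and "0 < m" and "2 * (m + 1) \<le> n"
    and "I \<noteq> {}" and "independent {1..n} (cpow_adj n m) I"
  shows "gamma_gr {1..n} (cpow_adj n m) I =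
           (if card I \<ge> 2 then ereal (real n - real (card I) * real m)
            else ereal (real n - 2 * real m))"
proof -
  interpret cyc n m using assms by unfold_locales auto
  have IV: "I \<subseteq> GV" and ind: "\<forall>u\<in>I. \<forall>v\<in>I. \<not> cpow_adj n m u v"
    using assms(5) unfolding independent_def by auto
  have fI: "finite I" using IV finite_subset by blast
  have cI: "1 \<le> card I" using fI assms(4) by (simp add: Suc_leI card_gt_0_iff)
  define L where "L = (if card I \<ge> 2 then n - card I * m else n - 2 * m)"
  have ub: "length S \<le> L" if "legal_dom_seq GV GE S" "I_S GV GE S = I" for S
  proof -
    have "Iof GV GE S = I" using that I_S_eq by metis
    then have "m * card I + length S \<le> n" using ub1[OF that(1)] by simp
    moreover have "2 * m + length S \<le> n" using ub2[OF that(1)] .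
    ultimately show ?thesis unfolding L_def by (auto simp: mult.commute)
  qed
  obtain S where S: "legal_dom_seq GV GE S" "Iof GV GE S = I" "length S = L"
  proof (cases "2 \<le> card I")
    case True
    obtain S where S: "legal_dom_seq GV GE S" "Iof GV GE S = I" "n - card I * m \<le> length S"
      using lb_multi[OF IV ind True] by blast
    have "length S \<le> L" using ub[OF S(1)] S(2) I_S_eq[OF S(1)] by simp
    then have "length S = L" using S(3) True unfolding L_def by simp
    then show ?thesis using that S by blast
  next
    case False
    then have "card I = 1" using cI by simp
    then obtain v where v: "I = {v}" using card_1_singletonE by blast
    then have "v \<in> GV" using IV by simp
    then obtain S where "legal_dom_seq GV GE S" "Iof GV GE S = {v}" "length S = n - 2 * m"
      using lb_single by blast
    then show ?thesis using that v False unfolding L_def by simp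
  qed
  have IS: "I_S GV GE S = I" using I_S_eq[OF S(1)] S(2) by simp
  have "gamma_gr GV GE I = ereal (real L)"
    unfolding gamma_gr_def
  proof (rule Sup_eqI)
    fix y assume "y \<in> {ereal (real (length S)) |S. legal_dom_seq GV GE S \<and> I_S GV GE S = I}"
    then obtain S' where "y = ereal (real (length S'))" "legal_dom_seq GV GE S'" "I_S GV GE S' = I" by auto
    then show "y \<le> ereal (real L)" using ub by simp
  next
    fix y assume "\<And>z. z \<in> {ereal (real (length S)) |S. legal_dom_seq GV GE S \<and> I_S GV GE S = I} \<Longrightarrow> z \<le> y"
    then show "ereal (real L) \<le> y" using S(1,3) IS by blast
  qed
  moreover have "m * card I + L \<le> n" using ub1[OF S(1)] S(2,3) by simp
  moreover have "2 * m + L \<le> n" using ub2[OF S(1)] S(3) by simp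
  ultimately show ?thesis unfolding L_def by (auto simp: of_nat_diff mult.commute)
qed


end
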